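(* Let $D$ be a regular $(v,k,\lambda,\mu)$-PDS in a finite group $G$ with $0<\mu<k$ and $\sqrt\Delta\in\mathbb{Z}$. Let $\mathcal{L}$ be the group of linear characters of $G$, $p$ a prime with $p\nmid\sqrt\Delta$, and $P$ a nontrivial Sylow $p$-subgroup of $\mathcal{L}$. Then for every nonprincipal $\xi'\in P$, \[\sum_{\xi\in P}\xi(D)=k+(|P|-1)\xi'(D).\] In particular all nonprincipal characters in $P$ take the same value on $D$.
   Context: A $(v,k,\lambda,\mu)$-PDS in a group $G$ of order $v$ is a $k$-subset $D$ such that every nonidentity element of $D$ is $xy^{-1}$ ($x,y\in D$) in exactly $\lambda$ ways and every nonidentity element of $G\setminus D$ in exactly $\mu$ ways; regular means $D=D^{(-1)}$ and $1\notin D$. $\Delta=(\lambda-\mu)^2+4(k-\mu)$; $\chi(D)=\sum_{d\in D}\chi(d)$. *)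

theory Defs
  imports "HOL-Algebra.Algebra" "HOL-Computational_Algebra.Primes" "HOL-Library.FuncSet" Complex_Main
begin

definition diff_count :: "('a, 'b) monoid_scheme \<Rightarrow> 'a set \<Rightarrow> 'a \<Rightarrow> nat" where
  "diff_count G D g = card {(x, y). x \<in> D \<and> y \<in> D \<and> x \<otimes>\<^bsub>G\<^esub> inv\<^bsub>G\<^esub> y = g}"

definition is_pds :: "('a, 'b) monoid_scheme \<Rightarrow> nat \<Rightarrow> nat \<Rightarrow> nat \<Rightarrow> nat \<Rightarrow> 'a set \<Rightarrow> bool" where
  "is_pds G v k lam mu D \<longleftrightarrow>
     D \<subseteq> carrier G \<and> card (carrier G) = v \<and> card D = k \<and>
     (\<forall>g \<in> D. g \<noteq> \<one>\<^bsub>G\<^esub> \<longrightarrow> diff_count G D g = lam) \<and>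
     (\<forall>g \<in> carrier G - D. g \<noteq> \<one>\<^bsub>G\<^esub> \<longrightarrow> diff_count G D g = mu)"

definition is_regular_pds :: "('a, 'b) monoid_scheme \<Rightarrow> nat \<Rightarrow> nat \<Rightarrow> nat \<Rightarrow> nat \<Rightarrow> 'a set \<Rightarrow> bool" where
  "is_regular_pds G v k lam mu D \<longleftrightarrow>
     is_pds G v k lam mu D \<and> (\<lambda>x. inv\<^bsub>G\<^esub> x) ` D = D \<and> \<one>\<^bsub>G\<^esub> \<notin> D"

definition pds_Delta :: "nat \<Rightarrow> nat \<Rightarrow> nat \<Rightarrow> int" where
  "pds_Delta k lam mu = (int lam - int mu)^2 + 4 * (int k - int mu)"

definition linear_chars :: "('a, 'b) monoid_scheme \<Rightarrow> ('a \<Rightarrow> complex) set" where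
  "linear_chars G = {\<chi> \<in> extensional (carrier G).
      (\<forall>x \<in> carrier G. \<chi> x \<noteq> 0) \<and>
      (\<forall>x \<in> carrier G. \<forall>y \<in> carrier G. \<chi> (x \<otimes>\<^bsub>G\<^esub> y) = \<chi> x * \<chi> y)}"

definition char_group :: "('a, 'b) monoid_scheme \<Rightarrow> ('a \<Rightarrow> complex) monoid" where
  "char_group G = \<lparr> carrier = linear_chars G,
     monoid.mult = (\<lambda>\<chi> \<psi>. \<lambda>x \<in> carrier G. \<chi> x * \<psi> x),
     one = (\<lambda>x \<in> carrier G. 1) \<rparr>"

definition char_sum :: "('a \<Rightarrow> complex) \<Rightarrow> 'a set \<Rightarrow> complex" where
  "char_sum \<chi> D = (\<Sum>d\<in>D. \<chi> d)"

definition is_sylow :: "('c, 'd) monoid_scheme \<Rightarrow> nat \<Rightarrow> 'c set \<Rightarrow> bool" where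
  "is_sylow H p P \<longleftrightarrow> subgroup P H \<and> card P = p ^ multiplicity p (order H)"

end

theory Submission imports Defs "Jordan_Normal_Form.Char_Poly" begin

inductive_set zspan :: "complex set \<Rightarrow> complex set" for U :: "complex set" where
  zs0: "0 \<in> zspan U"
| zsb: "u \<in> U \<Longrightarrow> u \<in> zspan U"
| zsadd: "x \<in> zspan U \<Longrightarrow> y \<in> zspan U \<Longrightarrow> x + y \<in> zspan U"
| zsneg: "x \<in> zspan U \<Longrightarrow> - x \<in> zspan U"

definition mring :: "complex set \<Rightarrow> complex set" where
  "mring U = {x. \<forall>z\<in>zspan U. x * z \<in> zspan U}"

lemma zspan_diff: "x \<in> zspan U \<Longrightarrow> y \<in> zspan U \<Longrightarrow> x - y \<in> zspan U"
  using zsadd[OF _ zsneg] by (metis diff_conv_add_uminus)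

lemma zspan_repr:
  assumes "finite U" "z \<in> zspan U"
  shows "\<exists>a::complex \<Rightarrow> int. z = (\<Sum>u\<in>U. of_int (a u) * u)"
  using assms(2)
proof induction
  case zs0
  show ?case by (rule exI[of _ "\<lambda>_. 0"]) simp
next
  case (zsb u)
  show ?case
    by (rule exI[of _ "\<lambda>w. if w = u then 1 else 0"])
       (simp add: if_distrib[of "\<lambda>x. of_int x * _"] sum.delta[OF assms(1)] zsb cong: if_cong)
next
  case (zsadd x y)
  then obtain a b where "x = (\<Sum>u\<in>U. of_int (a u) * u)" "y = (\<Sum>u\<in>U. of_int (b u) * u)" by blast
  then show ?case
    by (intro exI[of _ "\<lambda>u. a u + b u"]) (simp add: sum.distrib distrib_right)
next
  case (zsneg x)
  then obtain a where "x = (\<Sum>u\<in>U. of_int (a u) * u)" by blast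
  then show ?case
    by (intro exI[of _ "\<lambda>u. - a u"]) (simp add: sum_negf)
qed

lemma mring_add: "x \<in> mring U \<Longrightarrow> y \<in> mring U \<Longrightarrow> x + y \<in> mring U"
  by (auto simp: mring_def distrib_right intro: zsadd)

lemma mring_neg: "x \<in> mring U \<Longrightarrow> - x \<in> mring U"
  by (auto simp: mring_def intro: zsneg)

lemma mring_diff: "x \<in> mring U \<Longrightarrow> y \<in> mring U \<Longrightarrow> x - y \<in> mring U"
  by (metis diff_conv_add_uminus mring_add mring_neg)

lemma mring_mult: "x \<in> mring U \<Longrightarrow> y \<in> mring U \<Longrightarrow> x * y \<in> mring U"
  by (auto simp: mring_def mult.assoc)

lemma mring_0: "0 \<in> mring U"
  by (auto simp: mring_def intro: zs0)

lemma mring_1: "1 \<in> mring U"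
  by (auto simp: mring_def)

lemma mring_of_nat: "of_nat m \<in> mring U"
  by (induction m) (auto intro: mring_add mring_0 mring_1)

lemma mring_of_int: "of_int m \<in> mring U"
proof (cases "m \<ge> 0")
  case True
  then have "(of_int m :: complex) = of_nat (nat m)" by simp
  then show ?thesis using mring_of_nat by metis
next
  case False
  then have "(of_int m :: complex) = - of_nat (nat (- m))" by simp
  then show ?thesis using mring_of_nat mring_neg by metis
qed

lemma mring_pow: "x \<in> mring U \<Longrightarrow> x ^ m \<in> mring U"
  by (induction m) (auto intro: mring_mult mring_1)

lemma mring_sum: "(\<And>a. a \<in> A \<Longrightarrow> f a \<in> mring U) \<Longrightarrow> sum f A \<in> mring U"
  by (induction A rule: infinite_finite_induct) (auto intro: mring_add mring_0)

lemma mring_base: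
  assumes "\<And>u w. u \<in> U \<Longrightarrow> w \<in> U \<Longrightarrow> u * w \<in> U" "u \<in> U"
  shows "u \<in> mring U"
  unfolding mring_def
proof safe
  fix z assume "z \<in> zspan U"
  then show "u * z \<in> zspan U"
    by induction (auto simp: distrib_left intro: zs0 zsb zsadd zsneg assms)
qed

lemma mring_algebraic_int:
  assumes fin: "finite U" and one: "1 \<in> U" and x: "x \<in> mring U"
  shows "algebraic_int x"
proof -
  obtain us where us: "set us = U" "distinct us" using finite_distinct_list[OF fin] by blast
  define n where "n = length us"
  have sumU: "(\<Sum>u\<in>U. f u) = (\<Sum>j<n. f (us ! j))" for f :: "complex \<Rightarrow> complex"
  proof -
    have "(\<Sum>u\<in>U. f u) = sum_list (map f us)" using us by (simp add: sum_list_distinct_conv_sum_set)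
    also have "\<dots> = (\<Sum>j<n. f (us ! j))" by (simp add: sum_list_sum_nth n_def atLeast0LessThan)
    finally show ?thesis .
  qed
  have "\<forall>i. \<exists>a::complex \<Rightarrow> int. i < n \<longrightarrow> x * us ! i = (\<Sum>u\<in>U. of_int (a u) * u)"
  proof
    fix i
    show "\<exists>a::complex \<Rightarrow> int. i < n \<longrightarrow> x * us ! i = (\<Sum>u\<in>U. of_int (a u) * u)"
    proof (cases "i < n")
      case True
      then have "us ! i \<in> U" using us n_def by auto
      then have "x * us ! i \<in> zspan U" using x unfolding mring_def by (auto intro: zsb)
      then show ?thesis using zspan_repr[OF fin] by blast
    qed auto
  qed
  then obtain c where c: "\<And>i. i < n \<Longrightarrow> x * us ! i = (\<Sum>u\<in>U. of_int (c i u) * u)"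
    by metis
  define M :: "int mat" where "M = mat n n (\<lambda>(i,j). c i (us ! j))"
  define v :: "complex vec" where "v = vec n (\<lambda>i. us ! i)"
  have Mc: "M \<in> carrier_mat n n" by (simp add: M_def)
  have Mc': "map_mat of_int M \<in> carrier_mat n n" by (simp add: M_def)
  have ev: "map_mat of_int M *\<^sub>v v = x \<cdot>\<^sub>v v"
  proof (rule eq_vecI)
    fix i assume "i < dim_vec (x \<cdot>\<^sub>v v)"
    then have i: "i < n" by (simp add: v_def)
    have "(map_mat of_int M *\<^sub>v v) $ i = (\<Sum>j<n. of_int (c i (us ! j)) * us ! j)"
      using i by (simp add: M_def v_def mult_mat_vec_def scalar_prod_def atLeast0LessThan)
    also have "\<dots> = x * us ! i" using c[OF i] sumU by simp
    finally show "(map_mat of_int M *\<^sub>v v) $ i = (x \<cdot>\<^sub>v v) $ i" using i by (simp add: v_def)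
  qed (simp add: v_def M_def)
  have "v \<noteq> 0\<^sub>v n"
  proof
    assume "v = 0\<^sub>v n"
    obtain j where "j < n" "us ! j = 1" using one us n_def by (metis in_set_conv_nth)
    then have "v $ j = 1" by (simp add: v_def)
    then show False using \<open>v = 0\<^sub>v n\<close> \<open>j < n\<close> by simp
  qed
  then have "eigenvector (map_mat of_int M) v x"
    unfolding eigenvector_def using ev by (simp add: v_def M_def)
  then have "eigenvalue (map_mat of_int M) x" unfolding eigenvalue_def by blast
  then have "poly (char_poly (map_mat of_int M)) x = 0"
    using eigenvalue_root_char_poly[OF Mc'] by blast
  moreover have "char_poly (map_mat of_int M) = map_poly of_int (char_poly M)"
    by (rule of_int_hom.char_poly_hom[OF Mc])
  moreover have "lead_coeff (char_poly M) = 1"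
    using degree_monic_char_poly[OF Mc] by simp
  ultimately show ?thesis
    unfolding algebraic_int_altdef_ipoly by metis
qed

lemma frob2:
  assumes p: "Factorial_Ring.prime (p::nat)" and x: "x \<in> mring U" and y: "y \<in> mring U"
  shows "\<exists>r\<in>mring U. (x + y) ^ p = x ^ p + y ^ p + of_nat p * r"
proof -
  have p1: "p \<ge> 1" using p prime_ge_1_nat by blast
  define r where "r = (\<Sum>k\<in>{1..<p}. of_nat ((p choose k) div p) * x ^ k * y ^ (p - k))"
  have "r \<in> mring U" unfolding r_def
    by (intro mring_sum mring_mult mring_of_nat mring_pow x y)
  have split: "{..p} = insert 0 (insert p {1..<p})" using p1 by auto
  have "(x + y) ^ p = (\<Sum>k\<le>p. of_nat (p choose k) * x ^ k * y ^ (p - k))"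
    by (rule binomial_ring)
  also have "\<dots> = y ^ p + x ^ p + (\<Sum>k\<in>{1..<p}. of_nat (p choose k) * x ^ k * y ^ (p - k))"
    unfolding split using p1 by (subst sum.insert; simp)+
  also have "(\<Sum>k\<in>{1..<p}. of_nat (p choose k) * x ^ k * y ^ (p - k)) = of_nat p * r"
    unfolding r_def sum_distrib_left
  proof (rule sum.cong)
    fix k assume k: "k \<in> {1..<p}"
    have "p dvd (p choose k)" using k p by (intro dvd_choose_prime) auto
    then have "(p choose k) = p * ((p choose k) div p)" by simp
    then have "(of_nat (p choose k) :: complex) = of_nat p * of_nat ((p choose k) div p)"
      by (metis of_nat_mult)
    then show "of_nat (p choose k) * x ^ k * y ^ (p - k) =
          of_nat p * (of_nat ((p choose k) div p) * x ^ k * y ^ (p - k))" by (simp add: mult.assoc)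
  qed simp
  finally show ?thesis using \<open>r \<in> mring U\<close> by (auto simp: add_ac)
qed

lemma frob_sum:
  assumes p: "Factorial_Ring.prime (p::nat)" and fin: "finite A" and f: "\<And>a. a \<in> A \<Longrightarrow> f a \<in> mring U"
  shows "\<exists>r\<in>mring U. (sum f A) ^ p = (\<Sum>a\<in>A. f a ^ p) + of_nat p * r"
  using fin f
proof (induction A rule: finite_induct)
  case empty
  have "p \<noteq> 0" using p by auto
  then show ?case using mring_0 by (auto simp: zero_power)
next
  case (insert a A)
  then obtain r where r: "r \<in> mring U" "(sum f A) ^ p = (\<Sum>a\<in>A. f a ^ p) + of_nat p * r" by auto
  obtain r2 where r2: "r2 \<in> mring U" "(f a + sum f A) ^ p = f a ^ p + (sum f A) ^ p + of_nat p * r2"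
    using frob2[OF p, of "f a" U "sum f A"] insert by (auto intro: mring_sum)
  show ?case
    by (rule bexI[of _ "r + r2"]) (use insert r r2 in \<open>auto simp: algebra_simps intro: mring_add\<close>)
qed

lemma mring_int_dvd:
  assumes fin: "finite U" and one: "1 \<in> U" and p: "Factorial_Ring.prime (p::nat)"
    and r: "r \<in> mring U" and eq: "of_int a = of_nat p * r"
  shows "int p dvd a"
proof -
  have p0: "(of_nat p :: complex) \<noteq> 0" using p by auto
  have "r = of_int a / of_nat p" using eq p0 by (simp add: field_simps)
  then have "r \<in> \<rat>" by simp
  moreover have "algebraic_int r" by (rule mring_algebraic_int[OF fin one r])
  ultimately have "r \<in> \<int>" using rational_algebraic_int_is_int by blast
  then obtain b where "r = of_int b" by (auto elim: Ints_cases)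
  then have "(of_int a :: complex) = of_int (int p * b)" using eq by simp
  then have "a = int p * b" using of_int_eq_iff by blast
  then show ?thesis by simp
qed

lemma nat_fermat:
  assumes p: "Factorial_Ring.prime (p::nat)"
  shows "int p dvd int m ^ p - int m"
proof -
  have U: "finite {1::complex}" "(1::complex) \<in> {1}" by auto
  obtain r where r: "r \<in> mring {1}"
    "(\<Sum>i<m. (1::complex)) ^ p = (\<Sum>i<m. 1 ^ p) + of_nat p * r"
    using frob_sum[OF p, of "{..<m}" "\<lambda>_. 1" "{1}"] mring_1 by auto
  then have "of_int (int m ^ p - int m) = of_nat p * r" by simp
  then show ?thesis by (rule mring_int_dvd[OF U p r(1)])
qed

lemma int_fermat:
  assumes p: "Factorial_Ring.prime (p::nat)"
  shows "int p dvd c ^ p - c"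
proof (cases "c \<ge> 0")
  case True
  then show ?thesis using nat_fermat[OF p, of "nat c"] by simp
next
  case False
  define m where "m = nat (- c)"
  have c: "c = - int m" using False m_def by simp
  have d1: "int p dvd (-1) ^ p + 1"
  proof (cases "p = 2")
    case True then show ?thesis by simp
  next
    case False
    then have "p > 2" using prime_ge_2_nat[OF p] by simp
    then have "odd p" using prime_odd_nat p by blast
    then show ?thesis by simp
  qed
  have "c ^ p - c = (-1) ^ p * (int m ^ p - int m) + ((-1) ^ p + 1) * int m"
    unfolding c by (simp add: power_minus' algebra_simps)
  then show ?thesis using nat_fermat[OF p, of m] d1 by simp
qed

lemma lc_mult: "\<chi> \<in> linear_chars G \<Longrightarrow> x \<in> carrier G \<Longrightarrow> y \<in> carrier G \<Longrightarrow>
   \<chi> (x \<otimes>\<^bsub>G\<^esub> y) = \<chi> x * \<chi> y"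
  by (simp add: linear_chars_def)

lemma lc_nz: "\<chi> \<in> linear_chars G \<Longrightarrow> x \<in> carrier G \<Longrightarrow> \<chi> x \<noteq> 0"
  by (simp add: linear_chars_def)

lemma lc_ext: "\<chi> \<in> linear_chars G \<Longrightarrow> x \<notin> carrier G \<Longrightarrow> \<chi> x = undefined"
  by (simp add: linear_chars_def extensional_def)

lemma lc_one: assumes "group G" "\<chi> \<in> linear_chars G" shows "\<chi> \<one>\<^bsub>G\<^esub> = 1"
proof -
  interpret group G by fact
  have "\<chi> \<one>\<^bsub>G\<^esub> = \<chi> \<one>\<^bsub>G\<^esub> * \<chi> \<one>\<^bsub>G\<^esub>" using lc_mult[OF assms(2), of "\<one>\<^bsub>G\<^esub>" "\<one>\<^bsub>G\<^esub>"] by simp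
  then show ?thesis using lc_nz[OF assms(2), of "\<one>\<^bsub>G\<^esub>"] by simp
qed

lemma lc_inv: assumes "group G" "\<chi> \<in> linear_chars G" "x \<in> carrier G"
  shows "\<chi> (inv\<^bsub>G\<^esub> x) = inverse (\<chi> x)"
proof -
  interpret group G by fact
  have "\<chi> (inv\<^bsub>G\<^esub> x) * \<chi> x = 1" using lc_mult[OF assms(2), of "inv\<^bsub>G\<^esub> x" x] assms lc_one[OF assms(1,2)] by simp
  then show ?thesis by (metis inverse_unique mult.commute)
qed

lemma lc_pow: assumes "group G" "\<chi> \<in> linear_chars G" "x \<in> carrier G"
  shows "\<chi> (x [^]\<^bsub>G\<^esub> (m::nat)) = \<chi> x ^ m"
proof -
  interpret group G by fact
  show ?thesis
    by (induction m) (use assms lc_one[OF assms(1,2)] lc_mult[OF assms(2)] in auto)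
qed

lemma char_group_group: assumes "group G" shows "group (char_group G)"
proof -
  interpret group G by fact
  show ?thesis
  proof (rule groupI)
    fix x y assume "x \<in> carrier (char_group G)" "y \<in> carrier (char_group G)"
    then show "x \<otimes>\<^bsub>char_group G\<^esub> y \<in> carrier (char_group G)"
      by (auto simp: char_group_def linear_chars_def)
  next
    show "\<one>\<^bsub>char_group G\<^esub> \<in> carrier (char_group G)"
      by (auto simp: char_group_def linear_chars_def)
  next
    fix x y z assume "x \<in> carrier (char_group G)" "y \<in> carrier (char_group G)" "z \<in> carrier (char_group G)"
    then show "x \<otimes>\<^bsub>char_group G\<^esub> y \<otimes>\<^bsub>char_group G\<^esub> z =
          x \<otimes>\<^bsub>char_group G\<^esub> (y \<otimes>\<^bsub>char_group G\<^esub> z)"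
      by (auto simp: char_group_def mult.assoc)
  next
    fix x assume x: "x \<in> carrier (char_group G)"
    show "\<one>\<^bsub>char_group G\<^esub> \<otimes>\<^bsub>char_group G\<^esub> x = x"
    proof
      fix g show "(\<one>\<^bsub>char_group G\<^esub> \<otimes>\<^bsub>char_group G\<^esub> x) g = x g"
        using x lc_ext[of x G g] by (auto simp: char_group_def)
    qed
  next
    fix x assume x: "x \<in> carrier (char_group G)"
    then have xl: "x \<in> linear_chars G" by (simp add: char_group_def)
    define y where "y = (\<lambda>g\<in>carrier G. inverse (x g))"
    have "y \<in> carrier (char_group G)"
      using xl by (auto simp: char_group_def linear_chars_def y_def)
    moreover have "y \<otimes>\<^bsub>char_group G\<^esub> x = \<one>\<^bsub>char_group G\<^esub>"
      using xl by (auto simp: char_group_def y_def linear_chars_def)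
    ultimately show "\<exists>y\<in>carrier (char_group G). y \<otimes>\<^bsub>char_group G\<^esub> x = \<one>\<^bsub>char_group G\<^esub>"
      by blast
  qed
qed

lemma char_group_pow: assumes "\<chi> \<in> linear_chars G" "x \<in> carrier G"
  shows "(\<chi> [^]\<^bsub>char_group G\<^esub> (m::nat)) x = \<chi> x ^ m"
  by (induction m) (use assms in \<open>auto simp: char_group_def\<close>)

lemma char_sum_G_zero:
  assumes G: "group G" and fin: "finite (carrier G)" and chi: "\<chi> \<in> linear_chars G"
    and ne: "\<chi> \<noteq> \<one>\<^bsub>char_group G\<^esub>"
  shows "(\<Sum>x\<in>carrier G. \<chi> x) = 0"
proof -
  interpret group G by fact
  obtain h where h: "h \<in> carrier G" "\<chi> h \<noteq> 1"
  proof -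
    have "\<exists>h\<in>carrier G. \<chi> h \<noteq> 1"
    proof (rule ccontr)
      assume "\<not> ?thesis"
      then have "\<chi> = (\<lambda>x\<in>carrier G. 1)" using lc_ext[OF chi] by (auto simp: fun_eq_iff)
      then show False using ne by (simp add: char_group_def)
    qed
    then show ?thesis using that by blast
  qed
  have "(\<Sum>x\<in>carrier G. \<chi> x) = (\<Sum>x\<in>(\<lambda>x. h \<otimes>\<^bsub>G\<^esub> x) ` carrier G. \<chi> x)"
    using surj_const_mult[OF h(1)] by simp
  also have "\<dots> = (\<Sum>x\<in>carrier G. \<chi> (h \<otimes>\<^bsub>G\<^esub> x))"
    by (rule sum.reindex[OF inj_on_cmult[OF h(1)], unfolded comp_def])
  also have "\<dots> = \<chi> h * (\<Sum>x\<in>carrier G. \<chi> x)"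
    using lc_mult[OF chi h(1)] by (simp add: sum_distrib_left)
  finally have "(\<chi> h - 1) * (\<Sum>x\<in>carrier G. \<chi> x) = 0" by (simp add: algebra_simps)
  then show ?thesis using h(2) by simp
qed

lemma grp_diff_one: fixes G (structure) assumes "group G" "x \<in> carrier G" "y \<in> carrier G"
  shows "x \<otimes>\<^bsub>G\<^esub> inv\<^bsub>G\<^esub> y = \<one>\<^bsub>G\<^esub> \<longleftrightarrow> x = y"
proof -
  interpret group G by fact
  show ?thesis
  proof
    assume "x \<otimes> inv y = \<one>"
    then have "(x \<otimes> inv y) \<otimes> y = y" using assms by simp
    then show "x = y" using assms by (simp add: m_assoc)
  qed (use assms in simp)
qed

lemma split3:
  assumes fin: "finite C" and DC: "D \<subseteq> C" and o: "e0 \<in> C" "e0 \<notin> D"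
  shows "(\<Sum>g\<in>C. f g) = f e0 + (\<Sum>g\<in>D. f g) + (\<Sum>g\<in>C - D - {e0}. f g)"
proof -
  have "(\<Sum>g\<in>C. f g) = f e0 + (\<Sum>g\<in>C - {e0}. f g)" using fin o by (simp add: sum.remove)
  also have "C - {e0} = D \<union> (C - D - {e0})" using DC o by auto
  also have "(\<Sum>g\<in>D \<union> (C - D - {e0}). f g) = (\<Sum>g\<in>D. f g) + (\<Sum>g\<in>C - D - {e0}. f g)"
    by (rule sum.union_disjoint) (use fin DC finite_subset in auto)
  finally show ?thesis by (simp add: add.assoc)
qed

lemma pds_char_sq:
  fixes G (structure)
  assumes G: "group G" and fin: "finite (carrier G)"
    and pds: "is_regular_pds G v k lam mu D"
    and chi: "\<chi> \<in> linear_chars G" and ne: "\<chi> \<noteq> \<one>\<^bsub>char_group G\<^esub>"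
  shows "(char_sum \<chi> D)^2 = of_nat k + of_nat lam * char_sum \<chi> D - of_nat mu * char_sum \<chi> D - of_nat mu"
proof -
  interpret group G by fact
  have Dc: "D \<subseteq> carrier G" and kD: "card D = k"
    and lamD: "\<And>g. g \<in> D \<Longrightarrow> g \<noteq> \<one> \<Longrightarrow> diff_count G D g = lam"
    and muD: "\<And>g. g \<in> carrier G - D \<Longrightarrow> g \<noteq> \<one> \<Longrightarrow> diff_count G D g = mu"
    and invD: "(\<lambda>x. inv x) ` D = D" and oneD: "\<one> \<notin> D"
    using pds unfolding is_regular_pds_def is_pds_def by auto
  have finD: "finite D" using Dc fin finite_subset by blast
  define cs where "cs = char_sum \<chi> D"
  have s1: "(\<Sum>y\<in>D. \<chi> y) = (\<Sum>y\<in>D. \<chi> (inv y))"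
  proof -
    have inj: "inj_on (\<lambda>x. inv x) D"
      by (rule inj_onI) (metis Dc inv_inv subsetD)
    have "(\<Sum>y\<in>D. \<chi> y) = (\<Sum>y\<in>(\<lambda>x. inv x) ` D. \<chi> y)" using invD by simp
    also have "\<dots> = (\<Sum>y\<in>D. \<chi> (inv y))" by (simp add: sum.reindex[OF inj])
    finally show ?thesis .
  qed
  have "cs^2 = (\<Sum>x\<in>D. \<chi> x) * (\<Sum>y\<in>D. \<chi> (inv y))"
    unfolding cs_def char_sum_def power2_eq_square using s1 by simp
  also have "\<dots> = (\<Sum>x\<in>D. \<Sum>y\<in>D. \<chi> (x \<otimes> inv y))"
    unfolding sum_product
    by (intro sum.cong refl) (metis lc_mult[OF chi] inv_closed Dc subsetD)
  also have "\<dots> = (\<Sum>pr\<in>D \<times> D. \<chi> (fst pr \<otimes> inv (snd pr)))"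
    by (simp add: sum.cartesian_product split_beta)
  also have "\<dots> = (\<Sum>g\<in>carrier G. \<Sum>pr\<in>{pr \<in> D \<times> D. fst pr \<otimes> inv (snd pr) = g}. \<chi> (fst pr \<otimes> inv (snd pr)))"
    by (rule sum.group[symmetric]) (use finD fin Dc in \<open>auto intro!: m_closed inv_closed\<close>)
  also have "\<dots> = (\<Sum>g\<in>carrier G. of_nat (diff_count G D g) * \<chi> g)"
  proof (rule sum.cong[OF refl])
    fix g assume "g \<in> carrier G"
    have "{pr \<in> D \<times> D. fst pr \<otimes> inv (snd pr) = g} = {(x, y). x \<in> D \<and> y \<in> D \<and> x \<otimes> inv y = g}"
      by auto
    moreover have "(\<Sum>pr\<in>{pr \<in> D \<times> D. fst pr \<otimes> inv (snd pr) = g}. \<chi> (fst pr \<otimes> inv (snd pr)))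
       = (\<Sum>pr\<in>{pr \<in> D \<times> D. fst pr \<otimes> inv (snd pr) = g}. \<chi> g)"
      by (rule sum.cong) auto
    ultimately show "(\<Sum>pr\<in>{pr \<in> D \<times> D. fst pr \<otimes> inv (snd pr) = g}. \<chi> (fst pr \<otimes> inv (snd pr))) =
        of_nat (diff_count G D g) * \<chi> g"
      unfolding diff_count_def by simp
  qed
  also have "\<dots> = of_nat (diff_count G D \<one>) * \<chi> \<one> + (\<Sum>g\<in>D. of_nat (diff_count G D g) * \<chi> g)
       + (\<Sum>g\<in>carrier G - D - {\<one>}. of_nat (diff_count G D g) * \<chi> g)"
    by (rule split3[OF fin Dc one_closed oneD])
  also have "diff_count G D \<one> = k"
  proof -
    have "{(x, y). x \<in> D \<and> y \<in> D \<and> x \<otimes> inv y = \<one>} = (\<lambda>x. (x, x)) ` D"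
      using grp_diff_one[OF G] Dc by auto
    then show ?thesis unfolding diff_count_def using kD by (simp add: card_image inj_on_def)
  qed
  also have "(\<Sum>g\<in>D. of_nat (diff_count G D g) * \<chi> g) = of_nat lam * cs"
    unfolding cs_def char_sum_def sum_distrib_left
    by (intro sum.cong refl) (use lamD oneD in auto)
  also have "(\<Sum>g\<in>carrier G - D - {\<one>}. of_nat (diff_count G D g) * \<chi> g)
       = of_nat mu * (\<Sum>g\<in>carrier G - D - {\<one>}. \<chi> g)"
    unfolding sum_distrib_left by (intro sum.cong refl) (use muD in auto)
  also have "(\<Sum>g\<in>carrier G - D - {\<one>}. \<chi> g) = - cs - 1"
  proof -
    have "(\<Sum>g\<in>carrier G. \<chi> g) = \<chi> \<one> + (\<Sum>g\<in>D. \<chi> g) + (\<Sum>g\<in>carrier G - D - {\<one>}. \<chi> g)"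
      by (rule split3[OF fin Dc one_closed oneD])
    then have h: "1 + (cs + (\<Sum>g\<in>carrier G - D - {\<one>}. \<chi> g)) = 0"
      using char_sum_G_zero[OF G fin chi ne] lc_one[OF G chi]
      unfolding cs_def char_sum_def by (simp add: add.assoc)
    have "(\<Sum>g\<in>carrier G - D - {\<one>}. \<chi> g) = (1 + (cs + (\<Sum>g\<in>carrier G - D - {\<one>}. \<chi> g))) - cs - 1"
      by simp
    then show ?thesis using h by simp
  qed
  finally show ?thesis using lc_one[OF G chi] unfolding cs_def by (simp add: algebra_simps)
qed

lemma parity_s:
  fixes b s e :: int
  assumes "s ^ 2 = b ^ 2 + 4 * e"
  shows "even (b + s)" "even (b - s)"
proof -
  have "even (s ^ 2) \<longleftrightarrow> even (b ^ 2)" using assms by simp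
  then have "even s \<longleftrightarrow> even b" by simp
  then show "even (b + s)" "even (b - s)" by auto
qed

lemma quad_aux:
  fixes c S L M K :: complex
  assumes h1: "S^2 = (L - M)^2 + 4 * (K - M)" and h2: "c^2 = K + L * c - M * c - M"
  shows "(2 * c - (L - M) - S) * (2 * c - (L - M) + S) = 0"
proof -
  have "(2 * c - (L - M) - S) * (2 * c - (L - M) + S) = (2 * c - (L - M))^2 - S^2"
    by (simp add: algebra_simps power2_eq_square)
  also have "\<dots> = 4 * (c^2 - (K + L * c - M * c - M))"
    unfolding h1 by (simp add: algebra_simps power2_eq_square)
  also have "\<dots> = 0" using h2 by simp
  finally show ?thesis .
qed

lemma char_val:
  fixes G (structure)
  assumes G: "group G" and fin: "finite (carrier G)"
    and pds: "is_regular_pds G v k lam mu D"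
    and s: "s ^ 2 = pds_Delta k lam mu"
    and chi: "\<chi> \<in> linear_chars G" and ne: "\<chi> \<noteq> \<one>\<^bsub>char_group G\<^esub>"
  shows "char_sum \<chi> D = of_int ((int lam - int mu + s) div 2) \<or>
         char_sum \<chi> D = of_int ((int lam - int mu - s) div 2)"
proof -
  define b where "b = int lam - int mu"
  define c where "c = char_sum \<chi> D"
  have s2: "s ^ 2 = b ^ 2 + 4 * (int k - int mu)" using s unfolding pds_Delta_def b_def by simp
  note par = parity_s[OF s2]
  have sq: "c^2 = of_nat k + of_nat lam * c - of_nat mu * c - of_nat mu"
    unfolding c_def by (rule pds_char_sq[OF G fin pds chi ne])
  have "(2 * c - of_int b - of_int s) * (2 * c - of_int b + of_int s) = 0"
  proof -
    have "(of_int (s^2) :: complex) = of_int (b ^ 2 + 4 * (int k - int mu))" using s2 by simp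
    then have "(of_int s :: complex)^2 = (of_int b)^2 + 4 * (of_nat k - of_nat mu)" by simp
    moreover have "(of_int b :: complex) = of_nat lam - of_nat mu" by (simp add: b_def)
    ultimately show ?thesis using quad_aux[OF _ sq, of "of_int s"] by simp
  qed
  then have "2 * c - of_int b - of_int s = 0 \<or> 2 * c - of_int b + of_int s = 0"
    by (simp only: mult_eq_0_iff)
  then have "2 * c = of_int (b + s) \<or> 2 * c = of_int (b - s)"
  proof
    assume "2 * c - of_int b - of_int s = 0"
    then show ?thesis by (metis diff_diff_eq eq_iff_diff_eq_0 of_int_add)
  next
    assume "2 * c - of_int b + of_int s = 0"
    then show ?thesis by (metis diff_diff_eq2 diff_add_eq eq_iff_diff_eq_0 of_int_diff)
  qed
  moreover have "(of_int (b + s) :: complex) = 2 * of_int ((b + s) div 2)"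
    using par(1) by (metis dvd_mult_div_cancel of_int_mult of_int_numeral)
  moreover have "(of_int (b - s) :: complex) = 2 * of_int ((b - s) div 2)"
    using par(2) by (metis dvd_mult_div_cancel of_int_mult of_int_numeral)
  ultimately show ?thesis unfolding c_def b_def by auto
qed

lemma sub_pow_eq:
  "x [^]\<^bsub>H\<lparr>carrier := P\<rparr>\<^esub> (n::nat) = x [^]\<^bsub>H\<^esub> n"
  by (induction n) auto

theorem mainTheorem5:
  fixes G :: "('a, 'b) monoid_scheme" and D :: "'a set"
    and v k lam mu p :: nat and s :: int and P :: "('a \<Rightarrow> complex) set"
  assumes "group G" and "finite (carrier G)"
    and "is_regular_pds G v k lam mu D"
    and "0 < mu" and "mu < k"
    and "s \<ge> 0" and "s ^ 2 = pds_Delta k lam mu"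
    and "Factorial_Ring.prime p" and "\<not> int p dvd s"
    and "is_sylow (char_group G) p P" and "card P > 1"
  shows "(\<forall>\<xi>' \<in> P. \<xi>' \<noteq> \<one>\<^bsub>char_group G\<^esub> \<longrightarrow>
           (\<Sum>\<xi>\<in>P. char_sum \<xi> D) = of_nat k + (of_nat (card P) - 1) * char_sum \<xi>' D)
       \<and> (\<forall>\<xi>1 \<in> P. \<forall>\<xi>2 \<in> P. \<xi>1 \<noteq> \<one>\<^bsub>char_group G\<^esub> \<longrightarrow> \<xi>2 \<noteq> \<one>\<^bsub>char_group G\<^esub> \<longrightarrow>
           char_sum \<xi>1 D = char_sum \<xi>2 D)"
proof -
  note G = assms(1) and fin = assms(2) and pds = assms(3) and sD = assms(7)
    and p = assms(8) and pns = assms(9) and syl = assms(10) and cP = assms(11)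
  interpret grp: group G by (rule G)
  define CG where "CG = char_group G"
  interpret cg: group CG unfolding CG_def by (rule char_group_group[OF G])
  have Dc: "D \<subseteq> carrier G" and kD: "card D = k"
    using pds unfolding is_regular_pds_def is_pds_def by auto
  have finD: "finite D" using Dc fin finite_subset by blast
  have subP: "subgroup P CG" and cardP: "card P = p ^ multiplicity p (Coset.order CG)"
    using syl unfolding is_sylow_def CG_def by auto
  have finP: "finite P" using cP card.infinite by fastforce
  have PL: "P \<subseteq> linear_chars G" using subgroup.subset[OF subP] by (simp add: CG_def char_group_def)
  have carCG: "carrier CG = linear_chars G" by (simp add: CG_def char_group_def)
  have oneP: "\<one>\<^bsub>CG\<^esub> \<in> P" using subgroup.one_closed[OF subP] .
  have one_val: "char_sum \<one>\<^bsub>CG\<^esub> D = of_nat k"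
    using Dc kD by (simp add: CG_def char_group_def char_sum_def subset_iff)
  define n where "n = Coset.order G"
  have n1: "n \<ge> 1" unfolding n_def Coset.order_def using fin grp.one_closed
    by (metis One_nat_def Suc_leI card_gt_0_iff empty_iff)
  define U where "U = {z::complex. z ^ n = 1}"
  have finU: "finite U" unfolding U_def by (rule finite_roots_unity[OF n1])
  have oneU: "1 \<in> U" unfolding U_def by simp
  have mulU: "u * w \<in> U" if "u \<in> U" "w \<in> U" for u w
    using that unfolding U_def by (simp add: power_mult_distrib)
  have valU: "\<psi> g \<in> mring U" if "\<psi> \<in> linear_chars G" "g \<in> carrier G" for \<psi> g
  proof -
    have "\<psi> g ^ n = \<psi> (g [^]\<^bsub>G\<^esub> n)" using lc_pow[OF G that] by simp
    also have "\<dots> = 1" unfolding n_def using grp.pow_order_eq_1[OF that(2)] lc_one[OF G that(1)] by simp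
    finally show ?thesis using mring_base[OF mulU] unfolding U_def by blast
  qed
  define b where "b = int lam - int mu"
  define r1 where "r1 = (b + s) div 2"
  define r2 where "r2 = (b - s) div 2"
  have s2: "s ^ 2 = b ^ 2 + 4 * (int k - int mu)" using sD unfolding pds_Delta_def b_def by simp
  have r12: "r1 - r2 = s"
  proof -
    obtain x where x: "b + s = 2 * x" using parity_s(1)[OF s2] by (rule evenE)
    obtain y where y: "b - s = 2 * y" using parity_s(2)[OF s2] by (rule evenE)
    have "r1 = x" "r2 = y" unfolding r1_def r2_def using x y by simp_all
    then show ?thesis using x y by linarith
  qed
  have nonpr: "char_sum \<psi> D = of_int r1 \<or> char_sum \<psi> D = of_int r2"
    if "\<psi> \<in> linear_chars G" "\<psi> \<noteq> \<one>\<^bsub>CG\<^esub>" for \<psi>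
    using char_val[OF G fin pds sD that(1)] that(2) unfolding CG_def r1_def r2_def b_def by blast
  have intv: "\<exists>a. char_sum \<psi> D = of_int a" if "\<psi> \<in> linear_chars G" for \<psi>
  proof (cases "\<psi> = \<one>\<^bsub>CG\<^esub>")
    case True then show ?thesis using one_val by (metis of_int_of_nat_eq)
  next
    case False then show ?thesis using nonpr[OF that] by blast
  qed
  have step: "int p dvd a - a'"
    if psiL: "\<psi> \<in> linear_chars G" and ha: "char_sum \<psi> D = of_int a"
      and ha': "char_sum (\<psi> [^]\<^bsub>CG\<^esub> p) D = of_int a'"
    for \<psi> a a'
  proof -
    obtain r where r: "r \<in> mring U" "(\<Sum>d\<in>D. \<psi> d) ^ p = (\<Sum>d\<in>D. \<psi> d ^ p) + of_nat p * r"
      using frob_sum[OF p finD, of \<psi> U] valU[OF psiL] Dc by blast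
    have "(\<Sum>d\<in>D. \<psi> d ^ p) = char_sum (\<psi> [^]\<^bsub>CG\<^esub> p) D"
      unfolding char_sum_def CG_def using char_group_pow[OF psiL] Dc by (intro sum.cong) auto
    then have "of_int (a ^ p - a') = of_nat p * r" using r(2) ha ha' unfolding char_sum_def by simp
    then have "int p dvd a ^ p - a'" by (rule mring_int_dvd[OF finU oneU p r(1)])
    moreover have "int p dvd a ^ p - a" by (rule int_fermat[OF p])
    ultimately have "int p dvd (a ^ p - a') - (a ^ p - a)" by (rule dvd_diff)
    then show ?thesis by (simp add: dvd_diff_commute)
  qed
  have iter: "\<exists>a'. char_sum (\<psi> [^]\<^bsub>CG\<^esub> (p ^ i)) D = of_int a' \<and> int p dvd a - a'"
    if "\<psi> \<in> linear_chars G" "char_sum \<psi> D = of_int a" for \<psi> a i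
  proof (induction i)
    case 0
    have psiC: "\<psi> \<in> carrier CG" using that carCG by simp
    then have "\<psi> [^]\<^bsub>CG\<^esub> (p ^ 0) = \<psi>" by simp
    then show ?case using that(2) by (intro exI[of _ a]) simp
  next
    case (Suc i)
    then obtain a' where a': "char_sum (\<psi> [^]\<^bsub>CG\<^esub> (p ^ i)) D = of_int a'" "int p dvd a - a'" by blast
    have psiC: "\<psi> \<in> carrier CG" using that carCG by simp
    have L: "\<psi> [^]\<^bsub>CG\<^esub> (p ^ i) \<in> linear_chars G" using cg.nat_pow_closed[OF psiC] carCG by simp
    have eq: "\<psi> [^]\<^bsub>CG\<^esub> (p ^ Suc i) = (\<psi> [^]\<^bsub>CG\<^esub> (p ^ i)) [^]\<^bsub>CG\<^esub> p"
      using cg.nat_pow_pow[OF psiC] by (simp add: mult.commute)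
    have L2: "(\<psi> [^]\<^bsub>CG\<^esub> (p ^ i)) [^]\<^bsub>CG\<^esub> p \<in> linear_chars G"
      using cg.nat_pow_closed[OF cg.nat_pow_closed[OF psiC]] carCG by simp
    obtain a'' where a'': "char_sum ((\<psi> [^]\<^bsub>CG\<^esub> (p ^ i)) [^]\<^bsub>CG\<^esub> p) D = of_int a''"
      using intv[OF L2] by blast
    have "int p dvd a' - a''" by (rule step[OF L a'(1) a''])
    then have "int p dvd (a - a') + (a' - a'')" using a'(2) by (rule dvd_add[rotated])
    then show ?case using eq a'' by (intro exI[of _ a'']) simp
  qed
  have cong_k: "int p dvd a - int k" if psiP: "\<psi> \<in> P" and hva: "char_sum \<psi> D = of_int a" for \<psi> a
  proof -
    define H where "H = CG\<lparr>carrier := P\<rparr>"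
    have grH: "group H" unfolding H_def by (rule subgroup.subgroup_is_group[OF subP cg.is_group])
    have "\<psi> [^]\<^bsub>H\<^esub> Coset.order H = \<one>\<^bsub>H\<^esub>" using group.pow_order_eq_1[OF grH] psiP by (simp add: H_def)
    then have pw: "\<psi> [^]\<^bsub>CG\<^esub> card P = \<one>\<^bsub>CG\<^esub>" by (simp add: H_def sub_pow_eq Coset.order_def)
    obtain a' where "char_sum (\<psi> [^]\<^bsub>CG\<^esub> (p ^ multiplicity p (Coset.order CG))) D = of_int a'" "int p dvd a - a'"
      using iter[OF _ hva] PL psiP by blast
    then have "char_sum \<one>\<^bsub>CG\<^esub> D = of_int a'" "int p dvd a - a'" using pw cardP by simp_all
    then have "a' = int k" using one_val by (metis of_int_eq_iff of_int_of_nat_eq)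
    then show ?thesis using \<open>int p dvd a - a'\<close> by simp
  qed
  have same: "char_sum \<xi>1 D = char_sum \<xi>2 D"
    if hx: "\<xi>1 \<in> P" "\<xi>2 \<in> P" "\<xi>1 \<noteq> \<one>\<^bsub>CG\<^esub>" "\<xi>2 \<noteq> \<one>\<^bsub>CG\<^esub>" for \<xi>1 \<xi>2
  proof (rule ccontr)
    assume neq: "char_sum \<xi>1 D \<noteq> char_sum \<xi>2 D"
    obtain c1 where c1: "char_sum \<xi>1 D = of_int c1" "c1 = r1 \<or> c1 = r2"
      using nonpr[of \<xi>1] hx PL by blast
    obtain c2 where c2: "char_sum \<xi>2 D = of_int c2" "c2 = r1 \<or> c2 = r2"
      using nonpr[of \<xi>2] hx PL by blast
    have d1: "int p dvd c1 - int k" using cong_k[OF hx(1) c1(1)] .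
    have d2: "int p dvd c2 - int k" using cong_k[OF hx(2) c2(1)] .
    have "int p dvd (c1 - int k) - (c2 - int k)" using dvd_diff[OF d1 d2] .
    then have d: "int p dvd c1 - c2" by simp
    have "c1 \<noteq> c2" using neq c1(1) c2(1) by auto
    then have "c1 - c2 = s \<or> c1 - c2 = - s" using c1(2) c2(2) r12 by auto
    then show False using d pns by (metis dvd_minus_iff)
  qed
  show ?thesis
  proof (intro conjI ballI impI)
    fix \<xi>' assume x: "\<xi>' \<in> P" "\<xi>' \<noteq> \<one>\<^bsub>char_group G\<^esub>"
    have "(\<Sum>\<xi>\<in>P. char_sum \<xi> D) = char_sum \<one>\<^bsub>CG\<^esub> D + (\<Sum>\<xi>\<in>P - {\<one>\<^bsub>CG\<^esub>}. char_sum \<xi> D)"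
      using finP oneP by (simp add: sum.remove)
    also have "(\<Sum>\<xi>\<in>P - {\<one>\<^bsub>CG\<^esub>}. char_sum \<xi> D) = (\<Sum>\<xi>\<in>P - {\<one>\<^bsub>CG\<^esub>}. char_sum \<xi>' D)"
    proof (rule sum.cong[OF refl])
      have x2: "\<xi>' \<noteq> \<one>\<^bsub>CG\<^esub>" using x(2) by (simp add: CG_def)
      fix \<xi> assume "\<xi> \<in> P - {\<one>\<^bsub>CG\<^esub>}"
      then show "char_sum \<xi> D = char_sum \<xi>' D" using same[of \<xi> \<xi>'] x(1) x2 by blast
    qed
    also have "\<dots> = of_nat (card P - 1) * char_sum \<xi>' D"
      using finP oneP by (simp add: card_Diff_singleton)
    also have "(of_nat (card P - 1) :: complex) = of_nat (card P) - 1"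
      using cP by (simp add: of_nat_diff)
    finally show "(\<Sum>\<xi>\<in>P. char_sum \<xi> D) = of_nat k + (of_nat (card P) - 1) * char_sum \<xi>' D"
      using one_val by simp
  next
    fix \<xi>1 \<xi>2 assume "\<xi>1 \<in> P" "\<xi>2 \<in> P" "\<xi>1 \<noteq> \<one>\<^bsub>char_group G\<^esub>" "\<xi>2 \<noteq> \<one>\<^bsub>char_group G\<^esub>"
    then show "char_sum \<xi>1 D = char_sum \<xi>2 D" using same unfolding CG_def by blast
  qed
qed

end
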